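(* Let $A=(a_{rs})$ be a complex $M\times N$ matrix, and let $m_1<m_2<\dots<m_M$ and $n_1<n_2<\dots<n_N$ be increasing finite sequences of natural numbers. Let $M_1\ge m_M$ and $N_1\ge n_N$, and let $B=(b_{jk})$ be the $M_1\times N_1$ matrix with $b_{jk}=a_{rs}$ when $j=m_r$ and $k=n_s$, and $b_{jk}=0$ otherwise. Then $h(A)=h(B)$.
   Context: Let $(\Omega,\Sigma,\mathbb P)$ be a probability space with a dyadic filtration $(\Sigma_k)_{k\ge0}$ (increasing sub-$\sigma$-algebras, each $\Sigma_k$ atomic with exactly $2^k$ atoms of probability $2^{-k}$); $\mathcal E_kf=\mathbb E(f\mid\Sigma_k)$, $\Delta_kf=\mathcal E_kf-\mathcal E_{k-1}f$ ($k\ge1$). For a complex $M\times N$ matrix $A=(a_{jk})$, $h(A)$ is the least constant such that $\big\|\max_{1\le j\le M}|\sum_{k=1}^N a_{jk}\Delta_kf|\big\|_{L_2}\le h(A)\|f\|_{L_2}$ for all $f\in L_2(\Omega)$; it does not depend on the choice of probability space and dyadic filtration. *)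

theory Defs
  imports "HOL-Probability.Probability"
begin

text \<open>The
  sigma-algebra Sigma_k is the one generated by P k (its atoms are exactly P k).\<close>
definition dyadic_filtration :: "'a measure \<Rightarrow> (nat \<Rightarrow> 'a set set) \<Rightarrow> bool" where
  "dyadic_filtration M P \<longleftrightarrow>
     (\<forall>k. P k \<subseteq> sets M \<and> finite (P k) \<and> card (P k) = 2 ^ k \<and> disjoint (P k)
          \<and> \<Union>(P k) = space M \<and> (\<forall>a\<in>P k. measure M a = 1 / 2 ^ k)
          \<and> (\<forall>a\<in>P (Suc k). \<exists>b\<in>P k. a \<subseteq> b))"

text \<open>Conditional expectation with respect to the atomic sigma-algebra generated by P k
  (the standard version: average of f over the atom containing x).\<close>
definition dyadic_cond_exp :: "'a measure \<Rightarrow> (nat \<Rightarrow> 'a set set) \<Rightarrow> nat \<Rightarrow> ('a \<Rightarrow> complex) \<Rightarrow> 'a \<Rightarrow> complex" where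
  "dyadic_cond_exp M P k f x =
     (\<Sum>a\<in>P k. indicator a x * ((LINT y:a|M. f y) / complex_of_real (measure M a)))"

definition dyadic_diff :: "'a measure \<Rightarrow> (nat \<Rightarrow> 'a set set) \<Rightarrow> nat \<Rightarrow> ('a \<Rightarrow> complex) \<Rightarrow> 'a \<Rightarrow> complex" where
  "dyadic_diff M P k f x = dyadic_cond_exp M P k f x - dyadic_cond_exp M P (k - 1) f x"

definition L2norm :: "'a measure \<Rightarrow> ('a \<Rightarrow> complex) \<Rightarrow> real" where
  "L2norm M g = sqrt (\<integral>x. (cmod (g x))\<^sup>2 \<partial>M)"

text \<open>h(A) for an m x n complex matrix A (entries A j k, 1 \<le> j \<le> m, 1 \<le> k \<le> n):
  the least constant c with || max_j |sum_k A j k Delta_k f| ||_2 \<le> c ||f||_2 for all f in L_2.\<close>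
definition hconst :: "'a measure \<Rightarrow> (nat \<Rightarrow> 'a set set) \<Rightarrow> nat \<Rightarrow> nat \<Rightarrow> (nat \<Rightarrow> nat \<Rightarrow> complex) \<Rightarrow> real" where
  "hconst M P m n A = Inf {c::real. 0 \<le> c \<and>
     (\<forall>f::'a \<Rightarrow> complex. f \<in> borel_measurable M \<and> integrable M (\<lambda>x. (cmod (f x))\<^sup>2) \<longrightarrow>
        L2norm M (\<lambda>x. MAX j\<in>{1..m}. cmod (\<Sum>k=1..n. A j k * dyadic_diff M P k f x))
          \<le> c * L2norm M f)}"

end

theory Submission
  imports Defs
begin


definition avg :: "'a measure \<Rightarrow> 'a set \<Rightarrow> ('a \<Rightarrow> 'b::{banach, second_countable_topology, real_normed_field}) \<Rightarrow> 'b" where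
  "avg M a g = (LINT x:a|M. g x) / of_real (measure M a)"

lemma sint_eq: "(LINT x:a|M. g x) = (\<integral>x. indicator a x *\<^sub>R g x \<partial>M)"
  by (simp add: set_lebesgue_integral_def)

context prob_space begin

lemma avg_cong:
  assumes "\<And>x. x \<in> a \<Longrightarrow> f x = g x"
  shows "avg M a f = avg M a g"
proof -
  have "(\<lambda>x. indicator a x *\<^sub>R f x) = (\<lambda>x. indicator a x *\<^sub>R g x)"
    using assms by (auto intro!: ext simp: indicator_def)
  then show ?thesis by (simp add: avg_def sint_eq)
qed

lemma avg_const:
  assumes "a \<in> sets M" "measure M a \<noteq> 0"
  shows "avg M a (\<lambda>_. c) = c"
  using assms by (simp add: avg_def set_integral_const scaleR_conv_of_real)

lemma int_ind: "integrable M g \<Longrightarrow> a \<in> sets M \<Longrightarrow> integrable M (\<lambda>x. indicator a x *\<^sub>R g x)"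
  for g :: "_ \<Rightarrow> 'b::{banach, second_countable_topology}"
  by (rule integrable_mult_indicator)

lemma avg_add:
  assumes "integrable M f" "integrable M g" "a \<in> sets M"
  shows "avg M a (\<lambda>x. f x + g x) = avg M a f + avg M a g"
proof -
  have "(\<integral>x. indicator a x *\<^sub>R (f x + g x) \<partial>M) = (\<integral>x. indicator a x *\<^sub>R f x \<partial>M) + (\<integral>x. indicator a x *\<^sub>R g x \<partial>M)"
    by (subst Bochner_Integration.integral_add[symmetric]) (auto intro!: int_ind assms simp: scaleR_add_right)
  then show ?thesis by (simp add: avg_def sint_eq add_divide_distrib)
qed

lemma avg_diff:
  assumes "integrable M f" "integrable M g" "a \<in> sets M"
  shows "avg M a (\<lambda>x. f x - g x) = avg M a f - avg M a g"
proof -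
  have "(\<integral>x. indicator a x *\<^sub>R (f x - g x) \<partial>M) = (\<integral>x. indicator a x *\<^sub>R f x \<partial>M) - (\<integral>x. indicator a x *\<^sub>R g x \<partial>M)"
    by (subst Bochner_Integration.integral_diff[symmetric]) (auto intro!: int_ind assms simp: scaleR_diff_right)
  then show ?thesis by (simp add: avg_def sint_eq diff_divide_distrib)
qed

lemma avg_cmult:
  shows "avg M a (\<lambda>x. c * f x) = c * avg M a f"
proof -
  have "(\<integral>x. indicator a x *\<^sub>R (c * f x) \<partial>M) = c * (\<integral>x. indicator a x *\<^sub>R f x \<partial>M)"
    by (simp add: scaleR_conv_of_real mult.left_commute)
  then show ?thesis by (simp add: avg_def sint_eq)
qed

lemma avg_Re:
  fixes f :: "_ \<Rightarrow> complex"
  assumes "integrable M f" "a \<in> sets M"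
  shows "avg M a (\<lambda>x. Re (f x)) = Re (avg M a f)"
proof -
  have "(\<integral>x. indicator a x *\<^sub>R Re (f x) \<partial>M) = Re (\<integral>x. indicator a x *\<^sub>R f x \<partial>M)"
    using integral_Re[OF int_ind[OF assms], symmetric] by simp
  then show ?thesis by (simp add: avg_def sint_eq Re_divide_of_real)
qed

lemma avg_split:
  assumes "a = a1 \<union> a2" "a1 \<inter> a2 = {}" "a1 \<in> sets M" "a2 \<in> sets M"
    "measure M a1 = measure M a / 2" "measure M a2 = measure M a / 2" "measure M a \<noteq> 0"
    "integrable M g"
  shows "avg M a g = (avg M a1 g + avg M a2 g) / 2"
proof -
  have "(LINT x:a|M. g x) = (LINT x:a1|M. g x) + (LINT x:a2|M. g x)"
    unfolding assms(1) by (rule set_integral_Un) (auto simp: set_integrable_def intro!: int_ind assms)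
  moreover have "of_real (measure M a) \<noteq> (0::'b)" using assms(7) by simp
  ultimately show ?thesis unfolding avg_def assms(5,6) of_real_divide
    by (simp add: field_simps)
qed

end


locale dyad = prob_space + fixes P :: "nat \<Rightarrow> 'a set set" assumes dyad: "dyadic_filtration M P"
begin

lemma atom_sets: "a \<in> P k \<Longrightarrow> a \<in> sets M"
  using dyad unfolding dyadic_filtration_def by blast
lemma atom_meas: "a \<in> P k \<Longrightarrow> measure M a = 1 / 2 ^ k"
  using dyad unfolding dyadic_filtration_def by blast
lemma atom_pos: "a \<in> P k \<Longrightarrow> measure M a \<noteq> 0"
  using atom_meas by simp
lemma atom_ne: "a \<in> P k \<Longrightarrow> a \<noteq> {}"
  using atom_pos by fastforce
lemma fin_P: "finite (P k)"
  using dyad unfolding dyadic_filtration_def by blast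
lemma card_P: "card (P k) = 2 ^ k"
  using dyad unfolding dyadic_filtration_def by blast
lemma union_P: "\<Union>(P k) = space M"
  using dyad unfolding dyadic_filtration_def by blast
lemma disj_P: "disjoint (P k)"
  using dyad unfolding dyadic_filtration_def by blast
lemma refine_P: "a \<in> P (Suc k) \<Longrightarrow> \<exists>b\<in>P k. a \<subseteq> b"
  using dyad unfolding dyadic_filtration_def by blast
lemma atom_space: "a \<in> P k \<Longrightarrow> a \<subseteq> space M"
  using union_P by blast
lemma atom_unique: "a \<in> P k \<Longrightarrow> b \<in> P k \<Longrightarrow> x \<in> a \<Longrightarrow> x \<in> b \<Longrightarrow> a = b"
  using disj_P[of k] unfolding disjoint_def disjnt_def by blast
lemma atom_ex: "x \<in> space M \<Longrightarrow> \<exists>a\<in>P k. x \<in> a"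
  using union_P by blast

lemma P0: "P 0 = {space M}"
proof -
  have "card (P 0) = 1" using card_P[of 0] by simp
  then obtain a where "P 0 = {a}" by (rule card_1_singletonE)
  then show ?thesis using union_P[of 0] by simp
qed

lemma nested: "k \<le> s \<Longrightarrow> e \<in> P s \<Longrightarrow> b \<in> P k \<Longrightarrow> x \<in> e \<Longrightarrow> x \<in> b \<Longrightarrow> e \<subseteq> b"
proof (induction s arbitrary: e)
  case 0 then have "k = 0" by simp
  then show ?case using atom_unique[of e 0 b x] 0 by simp
next
  case (Suc s)
  show ?case
  proof (cases "k = Suc s")
    case True then show ?thesis using Suc.prems atom_unique[of e "Suc s" b x] by simp
  next
    case False
    obtain e' where "e' \<in> P s" "e \<subseteq> e'" using refine_P Suc by blast
    moreover have "k \<le> s" using Suc.prems False by simp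
    ultimately show ?thesis using Suc.IH[of e'] Suc.prems by blast
  qed
qed

lemma children:
  assumes "a \<in> P k"
  shows "\<exists>a1 a2. a1 \<in> P (Suc k) \<and> a2 \<in> P (Suc k) \<and> a1 \<inter> a2 = {} \<and> a1 \<union> a2 = a"
proof -
  define ch where "ch = {b\<in>P (Suc k). b \<subseteq> a}"
  have fin: "finite ch" using fin_P unfolding ch_def by simp
  have U: "\<Union>ch = a"
  proof
    show "\<Union>ch \<subseteq> a" unfolding ch_def by blast
    show "a \<subseteq> \<Union>ch"
    proof
      fix x assume "x \<in> a"
      then have "x \<in> space M" using atom_space assms by blast
      then obtain b where b: "b \<in> P (Suc k)" "x \<in> b" using atom_ex by blast
      then have "b \<subseteq> a" using nested[of k "Suc k" b a x] assms \<open>x \<in> a\<close> by simp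
      then show "x \<in> \<Union>ch" using b unfolding ch_def by blast
    qed
  qed
  have "measure M a = measure M (\<Union>b\<in>ch. b)" using U by simp
  also have "\<dots> = (\<Sum>b\<in>ch. measure M b)"
  proof (rule measure_finite_Union[OF fin])
    show "(\<lambda>b. b) ` ch \<subseteq> sets M" "\<And>i. i\<in>ch \<Longrightarrow> emeasure M i \<noteq> \<infinity>" using atom_sets unfolding ch_def by auto
    show "disjoint_family_on (\<lambda>b. b) ch"
      unfolding disjoint_family_on_def ch_def using atom_unique by blast
  qed
  also have "\<dots> = (\<Sum>b\<in>ch. 1 / 2 ^ Suc k)"
    by (rule sum.cong) (auto simp: ch_def atom_meas)
  finally have "1 / 2 ^ k = real (card ch) / 2 ^ Suc k" using atom_meas[OF assms] by simp
  then have "card ch = 2" by (simp add: field_simps)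
  then obtain a1 a2 where ch: "ch = {a1, a2}" "a1 \<noteq> a2" by (auto simp: card_2_iff)
  have in1: "a1 \<in> P (Suc k)" "a2 \<in> P (Suc k)" using ch(1) unfolding ch_def by blast+
  have "a1 \<inter> a2 = {}"
    using ch(2) atom_unique[OF in1] by blast
  moreover have "a1 \<union> a2 = a" using U ch(1) by simp
  ultimately show ?thesis using in1 by blast
qed

lemma cond_exp_atom:
  assumes "a \<in> P k" "x \<in> a"
  shows "dyadic_cond_exp M P k f x = avg M a f"
proof -
  have "dyadic_cond_exp M P k f x = (\<Sum>b\<in>P k. indicator b x * avg M b f)"
    unfolding dyadic_cond_exp_def avg_def by simp
  also have "\<dots> = indicator a x * avg M a f"
  proof -
    have "(\<Sum>b\<in>P k - {a}. indicator b x * avg M b f) = 0"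
    proof (rule sum.neutral, rule ballI)
      fix b assume "b \<in> P k - {a}"
      then have "x \<notin> b" using assms atom_unique[of a k b x] by auto
      then show "indicator b x * avg M b f = 0" by simp
    qed
    then show ?thesis by (simp add: sum.remove[OF fin_P assms(1)])
  qed
  finally show ?thesis using assms by simp
qed

end


fun W :: "nat \<Rightarrow> real \<Rightarrow> (nat \<Rightarrow> complex) list \<Rightarrow> (nat \<Rightarrow> complex) \<Rightarrow> ereal" where
  "W R lam [] y = ereal ((MAX j\<in>{1..R}. cmod (y j))\<^sup>2)"
| "W R lam (v # vs) y = (SUP c::complex. (W R lam vs (\<lambda>j. y j + c * v j) + W R lam vs (\<lambda>j. y j - c * v j)) / 2 - ereal (lam * (cmod c)\<^sup>2))"

lemma ereal_half_nonneg: "0 \<le> (a::ereal) \<Longrightarrow> 0 \<le> b \<Longrightarrow> 0 \<le> (a + b) / 2"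
  by (cases a; cases b) auto

lemma W_nonneg: "0 \<le> W R lam vs y"
proof (induction vs arbitrary: y)
  case Nil then show ?case by simp
next
  case (Cons v vs)
  have "0 \<le> (W R lam vs (\<lambda>j. y j + 0 * v j) + W R lam vs (\<lambda>j. y j - 0 * v j)) / 2 - ereal (lam * (cmod 0)\<^sup>2)"
    using Cons.IH by (simp add: ereal_half_nonneg)
  also have "\<dots> \<le> W R lam (v # vs) y"
    unfolding W.simps by (rule SUP_upper) simp
  finally show ?case .
qed

lemma W_local: "(\<And>j. j \<in> {1..R} \<Longrightarrow> y j = y' j) \<Longrightarrow> W R lam vs y = W R lam vs y'"
proof (induction vs arbitrary: y y')
  case Nil
  have "(\<lambda>j. cmod (y j)) ` {1..R} = (\<lambda>j. cmod (y' j)) ` {1..R}" using Nil by auto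
  then show ?case by simp
next
  case (Cons v vs)
  have "\<And>c. W R lam vs (\<lambda>j. y j + c * v j) = W R lam vs (\<lambda>j. y' j + c * v j)"
       "\<And>c. W R lam vs (\<lambda>j. y j - c * v j) = W R lam vs (\<lambda>j. y' j - c * v j)"
    by (rule Cons.IH; simp add: Cons.prems)+
  then show ?case by simp
qed

lemma W_zero:
  assumes "\<And>j. j \<in> {1..R} \<Longrightarrow> v j = 0" "0 \<le> lam"
  shows "W R lam (v # vs) y = W R lam vs y"
proof -
  have e1: "W R lam vs (\<lambda>j. y j + c * v j) = W R lam vs y" for c
    by (rule W_local) (simp add: assms)
  have e2: "W R lam vs (\<lambda>j. y j - c * v j) = W R lam vs y" for c
    by (rule W_local) (simp add: assms)
  have h: "(w + w) / 2 = w" for w :: ereal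
    by (cases w) auto
  have "W R lam (v # vs) y = (SUP c::complex. W R lam vs y - ereal (lam * (cmod c)\<^sup>2))"
    unfolding W.simps e1 e2 h ..
  also have "\<dots> = W R lam vs y"
  proof (rule antisym)
    show "(SUP c::complex. W R lam vs y - ereal (lam * (cmod c)\<^sup>2)) \<le> W R lam vs y"
    proof (rule SUP_least)
      fix c :: complex
      have "0 \<le> lam * (cmod c)\<^sup>2" using assms(2) by simp
      then show "W R lam vs y - ereal (lam * (cmod c)\<^sup>2) \<le> W R lam vs y"
        by (cases "W R lam vs y") auto
    qed
    have "W R lam vs y = W R lam vs y - ereal (lam * (cmod 0)\<^sup>2)" by simp
    also have "\<dots> \<le> (SUP c::complex. W R lam vs y - ereal (lam * (cmod c)\<^sup>2))"
      by (rule SUP_upper) simp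
    finally show "W R lam vs y \<le> (SUP c::complex. W R lam vs y - ereal (lam * (cmod c)\<^sup>2))" .
  qed
  finally show ?thesis .
qed

lemma W_filter:
  assumes "0 \<le> lam"
  shows "W R lam vs y = W R lam (filter (\<lambda>v. \<exists>j\<in>{1..R}. v j \<noteq> 0) vs) y"
proof (induction vs arbitrary: y)
  case Nil then show ?case by simp
next
  case (Cons v vs)
  show ?case
  proof (cases "\<exists>j\<in>{1..R}. v j \<noteq> 0")
    case True then show ?thesis using Cons.IH by simp
  next
    case False
    then have "W R lam (v # vs) y = W R lam vs y" using W_zero[OF _ assms] by blast
    then show ?thesis using False Cons.IH by simp
  qed
qed

definition emb :: "nat \<Rightarrow> (nat \<Rightarrow> nat) \<Rightarrow> (nat \<Rightarrow> complex) \<Rightarrow> nat \<Rightarrow> complex" where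
  "emb M ms v j = (if j \<in> ms ` {1..M} then v (the_inv_into {1..M} ms j) else 0)"

lemma emb_ms: "inj_on ms {1..M} \<Longrightarrow> r \<in> {1..M} \<Longrightarrow> emb M ms v (ms r) = v r"
  unfolding emb_def by (simp add: the_inv_into_f_f)

lemma W_emb:
  assumes inj: "inj_on ms {1..M}" and sub: "ms ` {1..M} \<subseteq> {1..M1}" and M: "1 \<le> M"
  shows "W M1 lam (map (emb M ms) vs) (emb M ms y) = W M lam vs y"
proof (induction vs arbitrary: y)
  case Nil
  have ne: "{1..M} \<noteq> {}" using M by simp
  have "(MAX j\<in>{1..M1}. cmod (emb M ms y j)) = (MAX r\<in>{1..M}. cmod (y r))"
  proof (rule antisym)
    show "(MAX j\<in>{1..M1}. cmod (emb M ms y j)) \<le> (MAX r\<in>{1..M}. cmod (y r))"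
    proof (rule Max.boundedI)
      show "finite ((\<lambda>j. cmod (emb M ms y j)) ` {1..M1})" by simp
      have "1 \<in> {1..M}" using M by simp
      then have "ms 1 \<in> {1..M1}" using sub by blast
      then show "(\<lambda>j. cmod (emb M ms y j)) ` {1..M1} \<noteq> {}" by auto
      fix a assume "a \<in> (\<lambda>j. cmod (emb M ms y j)) ` {1..M1}"
      then obtain j where j: "a = cmod (emb M ms y j)" by blast
      show "a \<le> (MAX r\<in>{1..M}. cmod (y r))"
      proof (cases "j \<in> ms ` {1..M}")
        case True
        then obtain r where r: "r \<in> {1..M}" "j = ms r" by blast
        then have "a = cmod (y r)" using j emb_ms[OF inj] by simp
        then show ?thesis using r by (simp add: Max_ge_iff ne)
      next
        case False
        then have "a = 0" using j by (simp add: emb_def)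
        moreover have "cmod (y 1) \<le> (MAX r\<in>{1..M}. cmod (y r))" using M by (simp add: Max_ge_iff ne)
        ultimately show ?thesis by (smt (verit) norm_ge_zero)
      qed
    qed
    show "(MAX r\<in>{1..M}. cmod (y r)) \<le> (MAX j\<in>{1..M1}. cmod (emb M ms y j))"
    proof (rule Max.boundedI)
      show "finite ((\<lambda>j. cmod (y j)) ` {1..M})" by simp
      show "(\<lambda>j. cmod (y j)) ` {1..M} \<noteq> {}" using ne by auto
      fix a assume "a \<in> (\<lambda>j. cmod (y j)) ` {1..M}"
      then obtain r where r: "r \<in> {1..M}" "a = cmod (y r)" by blast
      then have "a = cmod (emb M ms y (ms r))" using emb_ms[OF inj] by simp
      moreover have "ms r \<in> {1..M1}" using sub r by blast
      ultimately show "a \<le> (MAX j\<in>{1..M1}. cmod (emb M ms y j))"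
        by (auto simp: Max_ge_iff)
    qed
  qed
  then show ?case by simp
next
  case (Cons v vs)
  have "(\<lambda>j. emb M ms y j + c * emb M ms v j) = emb M ms (\<lambda>j. y j + c * v j)" for c
    by (auto simp: emb_def)
  moreover have "(\<lambda>j. emb M ms y j - c * emb M ms v j) = emb M ms (\<lambda>j. y j - c * v j)" for c
    by (auto simp: emb_def)
  ultimately show ?case using Cons.IH by simp
qed



definition Phi :: "'a measure \<Rightarrow> (nat \<Rightarrow> 'a set set) \<Rightarrow> nat \<Rightarrow> nat \<Rightarrow> (nat \<Rightarrow> nat \<Rightarrow> complex) \<Rightarrow> nat \<Rightarrow> (nat \<Rightarrow> complex) \<Rightarrow> ('a \<Rightarrow> complex) \<Rightarrow> 'a \<Rightarrow> real" where
  "Phi M P R L X k y f x = (MAX j\<in>{1..R}. cmod (y j + (\<Sum>s\<in>{k..L}. X j s * dyadic_diff M P s f x)))\<^sup>2"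

definition LHS where
  "LHS M P R L X lam k a y f = avg M a (Phi M P R L X k y f) - lam * avg M a (\<lambda>x. (cmod (f x))\<^sup>2) + lam * (cmod (avg M a f))\<^sup>2"

context dyad begin

definition sq :: "('a \<Rightarrow> complex) \<Rightarrow> bool" where
  "sq f \<longleftrightarrow> f \<in> borel_measurable M \<and> integrable M (\<lambda>x. (cmod (f x))\<^sup>2)"

lemma sq_integrable: assumes "sq f" shows "integrable M f"
proof (rule Bochner_Integration.integrable_bound[where f="\<lambda>x. 1 + (cmod (f x))\<^sup>2"])
  show "integrable M (\<lambda>x. 1 + (cmod (f x))\<^sup>2)" using assms unfolding sq_def by simp
  show "f \<in> borel_measurable M" using assms unfolding sq_def by simp
  have "cmod z \<le> norm (1 + (cmod z)\<^sup>2)" for z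
  proof -
    have h: "(cmod z - 1)\<^sup>2 = (cmod z)\<^sup>2 - 2 * cmod z + 1" by (simp add: power2_eq_square algebra_simps)
    have "0 \<le> (cmod z - 1)\<^sup>2" by simp
    then have "cmod z \<le> 1 + (cmod z)\<^sup>2" using h norm_ge_zero[of z] by linarith
    then show ?thesis by simp
  qed
  then show "AE x in M. norm (f x) \<le> norm (1 + (cmod (f x))\<^sup>2)" by simp
qed

lemma bnd_integrable:
  fixes g :: "'a \<Rightarrow> 'b::{banach, second_countable_topology}"
  assumes "g \<in> borel_measurable M" "\<And>x. x \<in> space M \<Longrightarrow> norm (g x) \<le> K"
  shows "integrable M g"
  by (rule integrable_const_bound[where B=K]) (use assms in auto)

lemma ce_meas: "(\<lambda>x. dyadic_cond_exp M P k f x) \<in> borel_measurable M"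
  unfolding dyadic_cond_exp_def
  by (intro borel_measurable_sum borel_measurable_times borel_measurable_const borel_measurable_indicator atom_sets)

lemma ce_bnd: "cmod (dyadic_cond_exp M P k f x) \<le> (\<Sum>a\<in>P k. cmod (avg M a f))"
proof -
  have "cmod (dyadic_cond_exp M P k f x) \<le> (\<Sum>a\<in>P k. cmod (indicator a x * avg M a f))"
    unfolding dyadic_cond_exp_def avg_def by (rule norm_sum)
  also have "\<dots> \<le> (\<Sum>a\<in>P k. cmod (avg M a f))"
    by (rule sum_mono) (simp add: indicator_def norm_mult)
  finally show ?thesis .
qed

definition Kd where "Kd f s = (\<Sum>a\<in>P s. cmod (avg M a f)) + (\<Sum>a\<in>P (s - 1). cmod (avg M a f))"

lemma dd_meas: "(\<lambda>x. dyadic_diff M P k f x) \<in> borel_measurable M"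
  unfolding dyadic_diff_def using ce_meas by measurable

lemma dd_bnd: "cmod (dyadic_diff M P s f x) \<le> Kd f s"
  unfolding dyadic_diff_def Kd_def
  by (rule order.trans[OF norm_triangle_ineq4 add_mono[OF ce_bnd ce_bnd]])

lemma Phi_meas: "Phi M P R L X k y f \<in> borel_measurable M"
  unfolding Phi_def using dd_meas by measurable

lemma Phi_nonneg: "0 \<le> Phi M P R L X k y f x"
  unfolding Phi_def by simp

lemma Phi_bnd: "R \<noteq> 0 \<Longrightarrow> Phi M P R L X k y f x \<le> (\<Sum>j\<in>{1..R}. cmod (y j) + (\<Sum>s\<in>{k..L}. cmod (X j s) * Kd f s))\<^sup>2"
proof -
  assume False: "R \<noteq> 0"
  define T where "T j = cmod (y j) + (\<Sum>s\<in>{k..L}. cmod (X j s) * Kd f s)" for j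
  have T0: "0 \<le> T j" for j
    unfolding T_def Kd_def by (intro add_nonneg_nonneg sum_nonneg mult_nonneg_nonneg) auto
  have b: "cmod (y j + (\<Sum>s\<in>{k..L}. X j s * dyadic_diff M P s f x)) \<le> T j" for j
  proof -
    have "cmod (\<Sum>s\<in>{k..L}. X j s * dyadic_diff M P s f x) \<le> (\<Sum>s\<in>{k..L}. cmod (X j s * dyadic_diff M P s f x))"
      by (rule norm_sum)
    also have "\<dots> \<le> (\<Sum>s\<in>{k..L}. cmod (X j s) * Kd f s)"
      by (rule sum_mono) (simp add: norm_mult mult_left_mono dd_bnd)
    finally show ?thesis unfolding T_def using norm_triangle_ineq[of "y j" "\<Sum>s\<in>{k..L}. X j s * dyadic_diff M P s f x"] by linarith
  qed
  have "(MAX j\<in>{1..R}. cmod (y j + (\<Sum>s\<in>{k..L}. X j s * dyadic_diff M P s f x))) \<le> (\<Sum>j\<in>{1..R}. T j)"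
  proof (rule Max.boundedI)
    show "finite ((\<lambda>j. cmod (y j + (\<Sum>s\<in>{k..L}. X j s * dyadic_diff M P s f x))) ` {1..R})" by simp
    show "(\<lambda>j. cmod (y j + (\<Sum>s\<in>{k..L}. X j s * dyadic_diff M P s f x))) ` {1..R} \<noteq> {}" using False by simp
    fix t assume "t \<in> (\<lambda>j. cmod (y j + (\<Sum>s\<in>{k..L}. X j s * dyadic_diff M P s f x))) ` {1..R}"
    then obtain j where j: "j \<in> {1..R}" "t = cmod (y j + (\<Sum>s\<in>{k..L}. X j s * dyadic_diff M P s f x))" by blast
    have "T j \<le> (\<Sum>j\<in>{1..R}. T j)" by (rule member_le_sum) (use j T0 in auto)
    then show "t \<le> (\<Sum>j\<in>{1..R}. T j)" using b j by (meson order.trans)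
  qed
  moreover have "0 \<le> (MAX j\<in>{1..R}. cmod (y j + (\<Sum>s\<in>{k..L}. X j s * dyadic_diff M P s f x)))"
  proof -
    have "cmod (y 1 + (\<Sum>s\<in>{k..L}. X 1 s * dyadic_diff M P s f x)) \<le> (MAX j\<in>{1..R}. cmod (y j + (\<Sum>s\<in>{k..L}. X j s * dyadic_diff M P s f x)))"
      by (rule Max_ge) (use False in auto)
    then show ?thesis using norm_ge_zero order.trans by blast
  qed
  ultimately have "(MAX j\<in>{1..R}. cmod (y j + (\<Sum>s\<in>{k..L}. X j s * dyadic_diff M P s f x)))\<^sup>2 \<le> (\<Sum>j\<in>{1..R}. T j)\<^sup>2"
    by (rule power_mono)
  then show ?thesis unfolding Phi_def T_def .
qed

lemma Phi_int: "integrable M (Phi M P R L X k y f)"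
proof (cases "R = 0")
  case True
  then have "Phi M P R L X k y f = (\<lambda>_. (Max {})\<^sup>2)" by (simp add: Phi_def fun_eq_iff)
  then show ?thesis by simp
next
  case False
  show ?thesis by (rule bnd_integrable[OF Phi_meas]) (use Phi_bnd[OF False] Phi_nonneg in auto)
qed

lemma avg_nonneg: "(\<And>x. 0 \<le> g x) \<Longrightarrow> 0 \<le> avg M a (g :: 'a \<Rightarrow> real)"
  unfolding avg_def sint_eq by (intro divide_nonneg_nonneg integral_nonneg_AE) auto

end


context dyad begin

lemma jensen:
  assumes "sq f" "a \<in> sets M" "measure M a \<noteq> 0"
  shows "(cmod (avg M a f))\<^sup>2 \<le> avg M a (\<lambda>x. (cmod (f x))\<^sup>2)"
proof -
  define g where "g x = cmod (f x)" for x
  define t where "t = avg M a g"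
  have fi: "integrable M f" using sq_integrable[OF assms(1)] .
  have gi: "integrable M g" unfolding g_def using fi by simp
  have g2i: "integrable M (\<lambda>x. (g x)\<^sup>2)" using assms(1) unfolding sq_def g_def by simp
  have mpos: "0 < measure M a" using assms(3) measure_nonneg[of M a] by linarith
  have "cmod (LINT x:a|M. f x) \<le> (LINT x:a|M. g x)"
    unfolding sint_eq g_def
    by (rule order.trans[OF integral_norm_bound]) (simp add: norm_scaleR)
  then have c1: "cmod (avg M a f) \<le> t"
    unfolding t_def avg_def using mpos by (simp add: norm_divide divide_right_mono)
  have t0: "0 \<le> t" unfolding t_def g_def by (rule avg_nonneg) simp
  have "0 \<le> avg M a (\<lambda>x. (g x - t)\<^sup>2)" by (rule avg_nonneg) simp
  also have "avg M a (\<lambda>x. (g x - t)\<^sup>2) = avg M a (\<lambda>x. ((g x)\<^sup>2 - (2 * t) * g x) + t\<^sup>2)"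
    by (rule avg_cong) (simp add: power2_eq_square algebra_simps)
  also have "\<dots> = avg M a (\<lambda>x. (g x)\<^sup>2 - (2 * t) * g x) + t\<^sup>2"
    using avg_add[of "\<lambda>x. (g x)\<^sup>2 - (2 * t) * g x" "\<lambda>_. t\<^sup>2" a] avg_const[OF assms(2,3)] g2i gi assms(2) by simp
  also have "\<dots> = avg M a (\<lambda>x. (g x)\<^sup>2) - (2 * t) * t + t\<^sup>2"
    using avg_diff[of "\<lambda>x. (g x)\<^sup>2" "\<lambda>x. (2 * t) * g x" a] avg_cmult[of a "2 * t" g] g2i gi assms(2)
    by (simp add: t_def)
  finally have "t\<^sup>2 \<le> avg M a (\<lambda>x. (g x)\<^sup>2)" by (simp add: power2_eq_square)
  moreover have "(cmod (avg M a f))\<^sup>2 \<le> t\<^sup>2" using c1 by (simp add: power_mono)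
  ultimately show ?thesis unfolding g_def by simp
qed

lemma Phi_split:
  assumes "k \<le> L"
  shows "Phi M P R L X k y f x = Phi M P R L X (Suc k) (\<lambda>j. y j + dyadic_diff M P k f x * X j k) f x"
proof -
  have eq: "y j + (\<Sum>s\<in>{k..L}. X j s * dyadic_diff M P s f x) = (y j + dyadic_diff M P k f x * X j k) + (\<Sum>s\<in>{Suc k..L}. X j s * dyadic_diff M P s f x)" for j
    using assms by (simp add: sum.atLeast_Suc_atMost algebra_simps)
  show ?thesis unfolding Phi_def by (simp only: eq)
qed

lemma parallelogram: "(cmod ((m1 + m2) / 2))\<^sup>2 = ((cmod m1)\<^sup>2 + (cmod m2)\<^sup>2) / 2 - (cmod (m1 - (m1 + m2) / 2))\<^sup>2"
  by (simp only: cmod_power2) (simp add: power2_eq_square field_simps)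


lemma step_lemma:
  assumes sqf: "sq f" and a: "a \<in> P k" and a1: "a1 \<in> P (Suc k)" and a2: "a2 \<in> P (Suc k)"
    and dis: "a1 \<inter> a2 = {}" and un: "a1 \<union> a2 = a" and kL: "Suc k \<le> L"
  shows "LHS M P R L X lam (Suc k) a y f =
    (LHS M P R L X lam (Suc (Suc k)) a1 (\<lambda>j. y j + (avg M a1 f - avg M a f) * X j (Suc k)) f
     + LHS M P R L X lam (Suc (Suc k)) a2 (\<lambda>j. y j - (avg M a1 f - avg M a f) * X j (Suc k)) f) / 2
    - lam * (cmod (avg M a1 f - avg M a f))\<^sup>2"
proof -
  define c where "c = avg M a1 f - avg M a f"
  have ma1: "measure M a1 = measure M a / 2" using atom_meas[OF a1] atom_meas[OF a] by simp
  have ma2: "measure M a2 = measure M a / 2" using atom_meas[OF a2] atom_meas[OF a] by simp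
  have fi: "integrable M f" by (rule sq_integrable[OF sqf])
  have f2i: "integrable M (\<lambda>x. (cmod (f x))\<^sup>2)" using sqf unfolding sq_def by simp
  note spl = avg_split[OF un[symmetric] dis atom_sets[OF a1] atom_sets[OF a2] ma1 ma2 atom_pos[OF a]]
  have m: "avg M a f = (avg M a1 f + avg M a2 f) / 2" by (rule spl[OF fi])
  have d1: "dyadic_diff M P (Suc k) f x = c" if "x \<in> a1" for x
  proof -
    have "x \<in> a" using that un by blast
    then show ?thesis unfolding dyadic_diff_def c_def
      using cond_exp_atom[OF a1 that] cond_exp_atom[OF a] by simp
  qed
  have d2: "dyadic_diff M P (Suc k) f x = - c" if "x \<in> a2" for x
  proof -
    have "x \<in> a" using that un by blast
    then have "dyadic_diff M P (Suc k) f x = avg M a2 f - avg M a f" unfolding dyadic_diff_def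
      using cond_exp_atom[OF a2 that] cond_exp_atom[OF a] by simp
    also have "\<dots> = - c" unfolding c_def using m by (simp add: field_simps)
    finally show ?thesis .
  qed
  have P1: "avg M a1 (Phi M P R L X (Suc k) y f) = avg M a1 (Phi M P R L X (Suc (Suc k)) (\<lambda>j. y j + c * X j (Suc k)) f)"
    by (rule avg_cong) (simp add: Phi_split[OF kL] d1)
  have e2: "(\<lambda>j. y j + - c * X j (Suc k)) = (\<lambda>j. y j - c * X j (Suc k))" by simp
  have P2: "avg M a2 (Phi M P R L X (Suc k) y f) = avg M a2 (Phi M P R L X (Suc (Suc k)) (\<lambda>j. y j - c * X j (Suc k)) f)"
    by (rule avg_cong) (simp add: Phi_split[OF kL] d2 e2)
  have PP: "avg M a (Phi M P R L X (Suc k) y f) = (avg M a1 (Phi M P R L X (Suc k) y f) + avg M a2 (Phi M P R L X (Suc k) y f)) / 2"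
    by (rule spl[OF Phi_int])
  have FF: "avg M a (\<lambda>x. (cmod (f x))\<^sup>2) = (avg M a1 (\<lambda>x. (cmod (f x))\<^sup>2) + avg M a2 (\<lambda>x. (cmod (f x))\<^sup>2)) / 2"
    by (rule spl[OF f2i])
  have MM: "(cmod (avg M a f))\<^sup>2 = ((cmod (avg M a1 f))\<^sup>2 + (cmod (avg M a2 f))\<^sup>2) / 2 - (cmod c)\<^sup>2"
    unfolding m c_def by (rule parallelogram)
  show ?thesis unfolding LHS_def c_def[symmetric] PP FF MM P1 P2
    by (simp add: algebra_simps add_divide_distrib diff_divide_distrib)
qed


lemma ce_shift:
  assumes fi: "integrable M f" and gi: "integrable M g" and b: "b \<in> P k" and x: "x \<in> b"
    and sh: "\<And>x. x \<in> b \<Longrightarrow> g x = f x + c" and ks: "k \<le> s"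
  shows "dyadic_cond_exp M P s g x = dyadic_cond_exp M P s f x + c"
proof -
  have "x \<in> space M" using atom_space[OF b] x by blast
  then obtain e where e: "e \<in> P s" "x \<in> e" using atom_ex by blast
  have eb: "e \<subseteq> b" using nested[OF ks e(1) b e(2) x] .
  have "dyadic_cond_exp M P s g x = avg M e g" by (rule cond_exp_atom[OF e])
  also have "\<dots> = avg M e (\<lambda>x. f x + c)" by (rule avg_cong) (use eb sh in blast)
  also have "\<dots> = avg M e f + avg M e (\<lambda>_. c)" by (rule avg_add[OF fi _ atom_sets[OF e(1)]]) simp
  also have "\<dots> = avg M e f + c" using avg_const[OF atom_sets[OF e(1)] atom_pos[OF e(1)]] by simp
  also have "avg M e f = dyadic_cond_exp M P s f x" by (rule cond_exp_atom[OF e, symmetric])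
  finally show ?thesis .
qed

lemma cmod_shift: "(cmod (z + c))\<^sup>2 = (cmod z)\<^sup>2 + 2 * Re (cnj c * z) + (cmod c)\<^sup>2"
  by (simp only: cmod_power2) (simp add: power2_eq_square algebra_simps)

lemma shift:
  assumes sf: "sq f" and sg: "sq g" and b: "b \<in> P k" and sh: "\<And>x. x \<in> b \<Longrightarrow> g x = f x + c"
    and f0: "avg M b f = 0"
  shows "LHS M P R L X lam (Suc k) b y g = LHS M P R L X lam (Suc k) b y f"
proof -
  have fi: "integrable M f" by (rule sq_integrable[OF sf])
  have gi: "integrable M g" by (rule sq_integrable[OF sg])
  have f2i: "integrable M (\<lambda>x. (cmod (f x))\<^sup>2)" using sf unfolding sq_def by simp
  have bs: "b \<in> sets M" by (rule atom_sets[OF b])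
  have dd: "dyadic_diff M P s g x = dyadic_diff M P s f x" if "x \<in> b" "Suc k \<le> s" for x s
    unfolding dyadic_diff_def
    using ce_shift[OF fi gi b that(1) sh, of s] ce_shift[OF fi gi b that(1) sh, of "s - 1"] that(2) by simp
  have PP: "avg M b (Phi M P R L X (Suc k) y g) = avg M b (Phi M P R L X (Suc k) y f)"
    by (rule avg_cong) (simp add: Phi_def dd)
  have ag: "avg M b g = c"
  proof -
    have "avg M b g = avg M b (\<lambda>x. f x + c)" by (rule avg_cong) (rule sh)
    also have "\<dots> = avg M b f + avg M b (\<lambda>_. c)" by (rule avg_add[OF fi _ bs]) simp
    finally show ?thesis using avg_const[OF bs atom_pos[OF b]] f0 by simp
  qed
  have "avg M b (\<lambda>x. (cmod (g x))\<^sup>2) = avg M b (\<lambda>x. ((cmod (f x))\<^sup>2 + 2 * Re (cnj c * f x)) + (cmod c)\<^sup>2)"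
    by (rule avg_cong) (simp add: sh cmod_shift)
  also have "\<dots> = avg M b (\<lambda>x. (cmod (f x))\<^sup>2 + 2 * Re (cnj c * f x)) + (cmod c)\<^sup>2"
    using avg_add[OF _ _ bs, of "\<lambda>x. (cmod (f x))\<^sup>2 + 2 * Re (cnj c * f x)" "\<lambda>_. (cmod c)\<^sup>2"]
      avg_const[OF bs atom_pos[OF b]] f2i fi by simp
  also have "avg M b (\<lambda>x. (cmod (f x))\<^sup>2 + 2 * Re (cnj c * f x)) = avg M b (\<lambda>x. (cmod (f x))\<^sup>2) + 2 * avg M b (\<lambda>x. Re (cnj c * f x))"
    using avg_add[OF _ _ bs, of "\<lambda>x. (cmod (f x))\<^sup>2" "\<lambda>x. 2 * Re (cnj c * f x)"]
      avg_cmult[of b 2 "\<lambda>x. Re (cnj c * f x)"] f2i fi by simp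
  also have "avg M b (\<lambda>x. Re (cnj c * f x)) = Re (avg M b (\<lambda>x. cnj c * f x))"
    by (rule avg_Re) (use fi bs in simp_all)
  also have "avg M b (\<lambda>x. cnj c * f x) = 0" using avg_cmult[of b "cnj c" f] f0 by simp
  finally have G: "avg M b (\<lambda>x. (cmod (g x))\<^sup>2) = avg M b (\<lambda>x. (cmod (f x))\<^sup>2) + (cmod c)\<^sup>2" by simp
  show ?thesis unfolding LHS_def PP G ag f0 by (simp add: algebra_simps)
qed

end


lemma ereal_le_half: "ereal l1 \<le> W1 \<Longrightarrow> ereal l2 \<le> W2 \<Longrightarrow> ereal ((l1 + l2) / 2 - r) \<le> (W1 + W2) / 2 - ereal r"
  by (cases W1; cases W2) auto

lemma ereal_split:
  assumes "ereal t < (A + B) / 2 - ereal r" "0 \<le> A" "0 \<le> B"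
  shows "\<exists>t1 t2. ereal t1 < A \<and> ereal t2 < B \<and> t < (t1 + t2) / 2 - r"
proof (cases A)
  case (real a)
  note Aa = real
  show ?thesis
  proof (cases B)
    case (real b)
    define e where "e = (a + b) / 2 - r - t"
    have e0: "0 < e" using assms(1) Aa real unfolding e_def by simp
    have q: "(a - e / 2 + (b - e / 2)) / 2 - r = t + e / 2" unfolding e_def by (simp add: field_simps)
    show ?thesis
      by (rule exI[of _ "a - e / 2"], rule exI[of _ "b - e / 2"]) (use e0 q Aa real in simp)
  next
    case PInf
    show ?thesis
      by (rule exI[of _ "a - 1"], rule exI[of _ "2 * \<bar>t\<bar> + 2 * \<bar>r\<bar> + \<bar>a\<bar> + (2::real)"]) (use PInf Aa abs_ge_self[of a] abs_ge_minus_self[of a] abs_ge_self[of t] abs_ge_self[of r] abs_ge_minus_self[of r] in \<open>auto simp: field_simps\<close>)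
  next
    case MInf then show ?thesis using assms by simp
  qed
next
  case PInf
  note Ai = PInf
  show ?thesis
  proof (cases B)
    case (real b)
    show ?thesis
      by (rule exI[of _ "2 * \<bar>t\<bar> + 2 * \<bar>r\<bar> + \<bar>b\<bar> + (2::real)"], rule exI[of _ "b - 1"]) (use real Ai abs_ge_self[of b] abs_ge_minus_self[of b] abs_ge_self[of t] abs_ge_self[of r] abs_ge_minus_self[of r] in \<open>auto simp: field_simps\<close>)
  next
    case PInf
    show ?thesis
      by (rule exI[of _ "\<bar>t\<bar> + \<bar>r\<bar> + (1::real)"], rule exI[of _ "\<bar>t\<bar> + \<bar>r\<bar> + 1"]) (use PInf Ai abs_ge_self[of t] abs_ge_self[of r] abs_ge_minus_self[of r] in \<open>auto simp: field_simps\<close>)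
  next
    case MInf then show ?thesis using assms by simp
  qed
next
  case MInf then show ?thesis using assms by simp
qed

lemma real_half_lt: "(t::real) < (t1 + t2) / 2 - q \<Longrightarrow> t1 < l1 \<Longrightarrow> t2 < l2 \<Longrightarrow> t < (l1 + l2) / 2 - q"
  by (simp add: field_simps)

context dyad begin

lemma bnd_sq:
  assumes "f \<in> borel_measurable M" "\<And>x. cmod (f x) \<le> K"
  shows "sq f"
  unfolding sq_def
proof
  show "f \<in> borel_measurable M" by fact
  show "integrable M (\<lambda>x. (cmod (f x))\<^sup>2)"
  proof (rule bnd_integrable[where K="K\<^sup>2"])
    show "(\<lambda>x. (cmod (f x))\<^sup>2) \<in> borel_measurable M" using assms(1) by measurable
    fix x show "norm ((cmod (f x))\<^sup>2) \<le> K\<^sup>2" using assms(2)[of x] by (simp add: power_mono)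
  qed
qed

lemma avg_shift:
  assumes "integrable M f" "b \<in> sets M" "measure M b \<noteq> 0" "\<And>x. x \<in> b \<Longrightarrow> g x = f x + c"
  shows "avg M b g = avg M b f + c"
proof -
  have "avg M b g = avg M b (\<lambda>x. f x + c)" by (rule avg_cong) (rule assms(4))
  also have "\<dots> = avg M b f + avg M b (\<lambda>_. c)" by (rule avg_add[OF assms(1) _ assms(2)]) simp
  finally show ?thesis using avg_const[OF assms(2,3)] by simp
qed

lemma Phi_end: "Phi M P R L X (Suc L) y f x = (MAX j\<in>{1..R}. cmod (y j))\<^sup>2"
  unfolding Phi_def by simp

lemma bound:
  assumes lam: "0 \<le> lam" and sqf: "sq f" and kL: "k \<le> L"
  shows "\<forall>a y. a \<in> P k \<longrightarrow> ereal (LHS M P R L X lam (Suc k) a y f) \<le> W R lam (map (\<lambda>s j. X j s) [Suc k..<Suc L]) y"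
  using kL
proof (induction k rule: inc_induct)
  case base
  show ?case
  proof (intro allI impI)
    fix a y assume a: "a \<in> P L"
    have "avg M a (Phi M P R L X (Suc L) y f) = (MAX j\<in>{1..R}. cmod (y j))\<^sup>2"
      unfolding Phi_end by (rule avg_const[OF atom_sets[OF a] atom_pos[OF a]])
    moreover have "(cmod (avg M a f))\<^sup>2 \<le> avg M a (\<lambda>x. (cmod (f x))\<^sup>2)"
      by (rule jensen[OF sqf atom_sets[OF a] atom_pos[OF a]])
    ultimately have "LHS M P R L X lam (Suc L) a y f \<le> (MAX j\<in>{1..R}. cmod (y j))\<^sup>2"
      unfolding LHS_def using lam by (simp add: algebra_simps mult_left_mono)
    then show "ereal (LHS M P R L X lam (Suc L) a y f) \<le> W R lam (map (\<lambda>s j. X j s) [Suc L..<Suc L]) y"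
      by simp
  qed
next
  case (step n)
  show ?case
  proof (intro allI impI)
    fix a y assume a: "a \<in> P n"
    obtain a1 a2 where ch: "a1 \<in> P (Suc n)" "a2 \<in> P (Suc n)" "a1 \<inter> a2 = {}" "a1 \<union> a2 = a"
      using children[OF a] by blast
    define c where "c = avg M a1 f - avg M a f"
    have ups: "[Suc n..<Suc L] = Suc n # [Suc (Suc n)..<Suc L]" using step(2) by (simp add: upt_conv_Cons)
    have "LHS M P R L X lam (Suc n) a y f =
      (LHS M P R L X lam (Suc (Suc n)) a1 (\<lambda>j. y j + c * X j (Suc n)) f
     + LHS M P R L X lam (Suc (Suc n)) a2 (\<lambda>j. y j - c * X j (Suc n)) f) / 2 - lam * (cmod c)\<^sup>2"
      unfolding c_def by (rule step_lemma) (use sqf a ch step(2) in auto)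
    then have "ereal (LHS M P R L X lam (Suc n) a y f) \<le>
      (W R lam (map (\<lambda>s j. X j s) [Suc (Suc n)..<Suc L]) (\<lambda>j. y j + c * X j (Suc n))
      + W R lam (map (\<lambda>s j. X j s) [Suc (Suc n)..<Suc L]) (\<lambda>j. y j - c * X j (Suc n))) / 2 - ereal (lam * (cmod c)\<^sup>2)"
      using ereal_le_half step(3) ch(1,2) by (simp del: upt_Suc)
    also have "\<dots> \<le> W R lam (map (\<lambda>s j. X j s) [Suc n..<Suc L]) y"
      unfolding ups list.map(2) W.simps by (rule SUP_upper2[where i=c]) (simp_all del: upt_Suc)
    finally show "ereal (LHS M P R L X lam (Suc n) a y f) \<le> W R lam (map (\<lambda>s j. X j s) [Suc n..<Suc L]) y" .
  qed
qed


lemma construct: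
  assumes lam: "0 \<le> lam" and kL: "k \<le> L"
  shows "\<forall>a y t. a \<in> P k \<longrightarrow> ereal t < W R lam (map (\<lambda>s j. X j s) [Suc k..<Suc L]) y \<longrightarrow>
    (\<exists>f. f \<in> borel_measurable M \<and> (\<exists>K. \<forall>x. cmod (f x) \<le> K) \<and> (\<forall>x. x \<notin> a \<longrightarrow> f x = 0)
        \<and> avg M a f = 0 \<and> t < LHS M P R L X lam (Suc k) a y f)"
  using kL
proof (induction k rule: inc_induct)
  case base
  show ?case
  proof (intro allI impI)
    fix a y t assume a: "a \<in> P L" and t: "ereal t < W R lam (map (\<lambda>s j. X j s) [Suc L..<Suc L]) y"
    have c0: "avg M a (\<lambda>_. c) = c" for c :: "'b::{banach, second_countable_topology, real_normed_field}"
      by (rule avg_const[OF atom_sets[OF a] atom_pos[OF a]])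
    have "LHS M P R L X lam (Suc L) a y (\<lambda>_. 0) = (MAX j\<in>{1..R}. cmod (y j))\<^sup>2"
      unfolding LHS_def Phi_end by (simp add: c0)
    then show "\<exists>f. f \<in> borel_measurable M \<and> (\<exists>K. \<forall>x. cmod (f x) \<le> K) \<and> (\<forall>x. x \<notin> a \<longrightarrow> f x = 0)
        \<and> avg M a f = 0 \<and> t < LHS M P R L X lam (Suc L) a y f"
      using t by (intro exI[of _ "\<lambda>_. 0"]) (auto simp: c0)
  qed
next
  case (step n)
  show ?case
  proof (intro allI impI)
    fix a y t assume a: "a \<in> P n" and t: "ereal t < W R lam (map (\<lambda>s j. X j s) [Suc n..<Suc L]) y"
    obtain a1 a2 where ch: "a1 \<in> P (Suc n)" "a2 \<in> P (Suc n)" "a1 \<inter> a2 = {}" "a1 \<union> a2 = a"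
      using children[OF a] by blast
    have ups: "[Suc n..<Suc L] = Suc n # [Suc (Suc n)..<Suc L]" using step(2) by (simp add: upt_conv_Cons)
    define vs where "vs = map (\<lambda>s j. X j s) [Suc (Suc n)..<Suc L]"
    have "ereal t < (SUP c::complex. (W R lam vs (\<lambda>j. y j + c * X j (Suc n)) + W R lam vs (\<lambda>j. y j - c * X j (Suc n))) / 2 - ereal (lam * (cmod c)\<^sup>2))"
      using t unfolding ups list.map(2) W.simps vs_def by simp
    then obtain c :: complex where c: "ereal t < (W R lam vs (\<lambda>j. y j + c * X j (Suc n)) + W R lam vs (\<lambda>j. y j - c * X j (Suc n))) / 2 - ereal (lam * (cmod c)\<^sup>2)"
      by (auto simp: less_SUP_iff)
    then obtain t1 t2 where tt: "ereal t1 < W R lam vs (\<lambda>j. y j + c * X j (Suc n))" "ereal t2 < W R lam vs (\<lambda>j. y j - c * X j (Suc n))"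
      "t < (t1 + t2) / 2 - lam * (cmod c)\<^sup>2"
      using ereal_split[OF c W_nonneg W_nonneg] by blast
    obtain f1 where f1: "f1 \<in> borel_measurable M" "\<exists>K. \<forall>x. cmod (f1 x) \<le> K" "\<forall>x. x \<notin> a1 \<longrightarrow> f1 x = 0"
      "avg M a1 f1 = 0" "t1 < LHS M P R L X lam (Suc (Suc n)) a1 (\<lambda>j. y j + c * X j (Suc n)) f1"
      using step(3) ch(1) tt(1) unfolding vs_def by blast
    obtain f2 where f2: "f2 \<in> borel_measurable M" "\<exists>K. \<forall>x. cmod (f2 x) \<le> K" "\<forall>x. x \<notin> a2 \<longrightarrow> f2 x = 0"
      "avg M a2 f2 = 0" "t2 < LHS M P R L X lam (Suc (Suc n)) a2 (\<lambda>j. y j - c * X j (Suc n)) f2"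
      using step(3) ch(2) tt(2) unfolding vs_def by blast
    obtain K1 where K1: "\<And>x. cmod (f1 x) \<le> K1" using f1(2) by blast
    obtain K2 where K2: "\<And>x. cmod (f2 x) \<le> K2" using f2(2) by blast
    define f where "f x = f1 x + f2 x + c * (indicator a1 x - indicator a2 x)" for x
    have fm: "f \<in> borel_measurable M" unfolding f_def
      using f1(1) f2(1) atom_sets[OF ch(1)] atom_sets[OF ch(2)] by measurable
    have fK: "cmod (f x) \<le> K1 + K2 + 2 * cmod c" for x
    proof -
      have "cmod (c * (indicator a1 x - indicator a2 x)) \<le> 2 * cmod c"
        by (auto simp: indicator_def norm_mult)
      then show ?thesis unfolding f_def
        using K1[of x] K2[of x] norm_triangle_ineq[of "f1 x + f2 x" "c * (indicator a1 x - indicator a2 x)"]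
          norm_triangle_ineq[of "f1 x" "f2 x"] by linarith
    qed
    have sqf: "sq f" by (rule bnd_sq[OF fm fK])
    have sqf1: "sq f1" by (rule bnd_sq[OF f1(1) K1])
    have sqf2: "sq f2" by (rule bnd_sq[OF f2(1) K2])
    have on1: "f x = f1 x + c" if "x \<in> a1" for x
    proof -
      have "x \<notin> a2" using that ch(3) by blast
      then show ?thesis using that f2(3) unfolding f_def by simp
    qed
    have on2: "f x = f2 x + - c" if "x \<in> a2" for x
    proof -
      have "x \<notin> a1" using that ch(3) by blast
      then show ?thesis using that f1(3) unfolding f_def by simp
    qed
    have out: "f x = 0" if "x \<notin> a" for x
    proof -
      have "x \<notin> a1" "x \<notin> a2" using that ch(4) by blast+
      then show ?thesis using f1(3) f2(3) unfolding f_def by simp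
    qed
    have av1: "avg M a1 f = c"
      using avg_shift[OF sq_integrable[OF sqf1] atom_sets[OF ch(1)] atom_pos[OF ch(1)] on1] f1(4) by simp
    have av2: "avg M a2 f = - c"
      using avg_shift[OF sq_integrable[OF sqf2] atom_sets[OF ch(2)] atom_pos[OF ch(2)] on2] f2(4) by simp
    have ma1: "measure M a1 = measure M a / 2" using atom_meas[OF ch(1)] atom_meas[OF a] by simp
    have ma2: "measure M a2 = measure M a / 2" using atom_meas[OF ch(2)] atom_meas[OF a] by simp
    have av: "avg M a f = 0"
      using avg_split[OF ch(4)[symmetric] ch(3) atom_sets[OF ch(1)] atom_sets[OF ch(2)] ma1 ma2 atom_pos[OF a] sq_integrable[OF sqf]]
      av1 av2 by simp
    have "LHS M P R L X lam (Suc n) a y f =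
      (LHS M P R L X lam (Suc (Suc n)) a1 (\<lambda>j. y j + (avg M a1 f - avg M a f) * X j (Suc n)) f
     + LHS M P R L X lam (Suc (Suc n)) a2 (\<lambda>j. y j - (avg M a1 f - avg M a f) * X j (Suc n)) f) / 2
     - lam * (cmod (avg M a1 f - avg M a f))\<^sup>2"
      by (rule step_lemma) (use sqf a ch step(2) in auto)
    also have "\<dots> = (LHS M P R L X lam (Suc (Suc n)) a1 (\<lambda>j. y j + c * X j (Suc n)) f1
     + LHS M P R L X lam (Suc (Suc n)) a2 (\<lambda>j. y j - c * X j (Suc n)) f2) / 2 - lam * (cmod c)\<^sup>2"
      using shift[OF sqf1 sqf ch(1) on1 f1(4), of R L X lam "\<lambda>j. y j + c * X j (Suc n)"]
        shift[OF sqf2 sqf ch(2) on2 f2(4), of R L X lam "\<lambda>j. y j - c * X j (Suc n)"]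
      unfolding av1 av by simp
    finally have "t < LHS M P R L X lam (Suc n) a y f"
      using real_half_lt[OF tt(3) f1(5) f2(5)] by simp
    then show "\<exists>f. f \<in> borel_measurable M \<and> (\<exists>K. \<forall>x. cmod (f x) \<le> K) \<and> (\<forall>x. x \<notin> a \<longrightarrow> f x = 0)
        \<and> avg M a f = 0 \<and> t < LHS M P R L X lam (Suc n) a y f"
      using fm fK out av by blast
  qed
qed

end


context dyad begin

lemma avg_space: "integrable M g \<Longrightarrow> avg M (space M) g = integral\<^sup>L M g"
  unfolding avg_def using set_integral_space prob_space by simp

lemma LHS_top:
  assumes "sq f"
  shows "LHS M P R L X lam (Suc 0) (space M) y f = integral\<^sup>L M (Phi M P R L X (Suc 0) y f)
     - lam * integral\<^sup>L M (\<lambda>x. (cmod (f x))\<^sup>2) + lam * (cmod (integral\<^sup>L M f))\<^sup>2"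
  using assms unfolding LHS_def sq_def
  by (simp add: avg_space Phi_int sq_integrable[OF assms])

lemma charac:
  assumes lam: "0 \<le> lam"
  shows "(\<forall>f. sq f \<longrightarrow> integral\<^sup>L M (Phi M P R L X (Suc 0) (\<lambda>_. 0) f) \<le> lam * integral\<^sup>L M (\<lambda>x. (cmod (f x))\<^sup>2))
    \<longleftrightarrow> W R lam (map (\<lambda>s j. X j s) [Suc 0..<Suc L]) (\<lambda>_. 0) \<le> 0"
proof
  assume H: "\<forall>f. sq f \<longrightarrow> integral\<^sup>L M (Phi M P R L X (Suc 0) (\<lambda>_. 0) f) \<le> lam * integral\<^sup>L M (\<lambda>x. (cmod (f x))\<^sup>2)"
  show "W R lam (map (\<lambda>s j. X j s) [Suc 0..<Suc L]) (\<lambda>_. 0) \<le> 0"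
  proof (rule ccontr)
    assume "\<not> ?thesis"
    then have "0 < W R lam (map (\<lambda>s j. X j s) [Suc 0..<Suc L]) (\<lambda>_. 0)" by (simp del: upt_Suc add: not_le)
    then have "ereal 0 < W R lam (map (\<lambda>s j. X j s) [Suc 0..<Suc L]) (\<lambda>_. 0)" by (simp add: zero_ereal_def)
    moreover have sp: "space M \<in> P 0" using P0 by simp
    ultimately have "\<exists>f. f \<in> borel_measurable M \<and> (\<exists>K. \<forall>x. cmod (f x) \<le> K) \<and> (\<forall>x. x \<notin> space M \<longrightarrow> f x = 0)
        \<and> avg M (space M) f = 0 \<and> 0 < LHS M P R L X lam (Suc 0) (space M) (\<lambda>_. 0) f"
      using construct[OF lam, where k=0 and R=R and X=X and L=L] by blast
    then obtain f where f: "f \<in> borel_measurable M" "\<exists>K. \<forall>x. cmod (f x) \<le> K" "avg M (space M) f = 0"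
      "0 < LHS M P R L X lam (Suc 0) (space M) (\<lambda>_. 0) f"
      by blast
    have sqf: "sq f" using f(1,2) bnd_sq by blast
    have "integral\<^sup>L M f = 0" using f(3) avg_space[OF sq_integrable[OF sqf]] by simp
    then have "0 < integral\<^sup>L M (Phi M P R L X (Suc 0) (\<lambda>_. 0) f) - lam * integral\<^sup>L M (\<lambda>x. (cmod (f x))\<^sup>2)"
      using f(4) LHS_top[OF sqf] by simp
    then show False using H sqf by fastforce
  qed
next
  assume W0: "W R lam (map (\<lambda>s j. X j s) [Suc 0..<Suc L]) (\<lambda>_. 0) \<le> 0"
  show "\<forall>f. sq f \<longrightarrow> integral\<^sup>L M (Phi M P R L X (Suc 0) (\<lambda>_. 0) f) \<le> lam * integral\<^sup>L M (\<lambda>x. (cmod (f x))\<^sup>2)"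
  proof (intro allI impI)
    fix f assume sqf: "sq f"
    have "ereal (LHS M P R L X lam (Suc 0) (space M) (\<lambda>_. 0) f) \<le> W R lam (map (\<lambda>s j. X j s) [Suc 0..<Suc L]) (\<lambda>_. 0)"
      using bound[OF lam sqf, where k=0 and R=R and X=X and L=L] P0 by auto
    then have "ereal (LHS M P R L X lam (Suc 0) (space M) (\<lambda>_. 0) f) \<le> 0" using W0 by (rule order.trans)
    then have "LHS M P R L X lam (Suc 0) (space M) (\<lambda>_. 0) f \<le> 0" by (simp add: zero_ereal_def)
    then have "integral\<^sup>L M (Phi M P R L X (Suc 0) (\<lambda>_. 0) f) - lam * integral\<^sup>L M (\<lambda>x. (cmod (f x))\<^sup>2) \<le> - lam * (cmod (integral\<^sup>L M f))\<^sup>2"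
      using LHS_top[OF sqf] by simp
    moreover have "0 \<le> lam * (cmod (integral\<^sup>L M f))\<^sup>2" using lam by simp
    ultimately show "integral\<^sup>L M (Phi M P R L X (Suc 0) (\<lambda>_. 0) f) \<le> lam * integral\<^sup>L M (\<lambda>x. (cmod (f x))\<^sup>2)"
      by linarith
  qed
qed

lemma Q_iff:
  assumes c: "0 \<le> c"
  shows "(\<forall>f::'a \<Rightarrow> complex. f \<in> borel_measurable M \<and> integrable M (\<lambda>x. (cmod (f x))\<^sup>2) \<longrightarrow>
        L2norm M (\<lambda>x. MAX j\<in>{1..R}. cmod (\<Sum>k=1..L. X j k * dyadic_diff M P k f x)) \<le> c * L2norm M f)
   \<longleftrightarrow> W R (c\<^sup>2) (map (\<lambda>s j. X j s) [Suc 0..<Suc L]) (\<lambda>_. 0) \<le> 0"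
proof -
  have e: "L2norm M (\<lambda>x. MAX j\<in>{1..R}. cmod (\<Sum>k=1..L. X j k * dyadic_diff M P k f x)) \<le> c * L2norm M f
    \<longleftrightarrow> integral\<^sup>L M (Phi M P R L X (Suc 0) (\<lambda>_. 0) f) \<le> c\<^sup>2 * integral\<^sup>L M (\<lambda>x. (cmod (f x))\<^sup>2)" for f
  proof -
    have p: "(\<lambda>x. (cmod (complex_of_real (MAX j\<in>{1..R}. cmod (\<Sum>k=1..L. X j k * dyadic_diff M P k f x))))\<^sup>2)
      = Phi M P R L X (Suc 0) (\<lambda>_. 0) f"
      by (simp add: Phi_def fun_eq_iff)
    have i0: "0 \<le> integral\<^sup>L M (Phi M P R L X (Suc 0) (\<lambda>_. 0) f)"
      by (rule integral_nonneg_AE) (simp add: Phi_nonneg)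
    have i1: "0 \<le> integral\<^sup>L M (\<lambda>x. (cmod (f x))\<^sup>2)" by (rule integral_nonneg_AE) simp
    have "c * sqrt (integral\<^sup>L M (\<lambda>x. (cmod (f x))\<^sup>2)) = sqrt (c\<^sup>2 * integral\<^sup>L M (\<lambda>x. (cmod (f x))\<^sup>2))"
      using c by (simp add: real_sqrt_mult)
    then show ?thesis unfolding L2norm_def p by simp
  qed
  show ?thesis unfolding e sq_def[symmetric] using charac[of "c\<^sup>2" R L X] by simp
qed

end

lemma comb:
  fixes A B :: "nat \<Rightarrow> nat \<Rightarrow> complex" and M N M1 N1 :: nat and ms ns :: "nat \<Rightarrow> nat"
  assumes "M \<ge> 1" and "N \<ge> 1"
    and smm: "strict_mono_on {1..M} ms" and smn: "strict_mono_on {1..N} ns"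
    and "ms 1 \<ge> 1" and "ns 1 \<ge> 1"
    and "M1 \<ge> ms M" and "N1 \<ge> ns N"
    and BA: "\<forall>r\<in>{1..M}. \<forall>s\<in>{1..N}. B (ms r) (ns s) = A r s"
    and B0: "\<forall>j k. j \<notin> ms ` {1..M} \<or> k \<notin> ns ` {1..N} \<longrightarrow> B j k = 0"
    and lam: "0 \<le> lam"
  shows "W M1 lam (map (\<lambda>s j. B j s) [Suc 0..<Suc N1]) (\<lambda>_. 0) = W M lam (map (\<lambda>s j. A j s) [Suc 0..<Suc N]) (\<lambda>_. 0)"
proof -
  define P1 where "P1 = (\<lambda>v::nat \<Rightarrow> complex. \<exists>j\<in>{1..M1}. v j \<noteq> 0)"
  define Bc where "Bc = (\<lambda>s j. B j s)"
  define Ac where "Ac = (\<lambda>s j. A j s)"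
  have injm: "inj_on ms {1..M}" by (rule strict_mono_on_imp_inj_on[OF smm])
  have subm: "ms ` {1..M} \<subseteq> {1..M1}"
  proof
    fix j assume "j \<in> ms ` {1..M}"
    then obtain r where r: "r \<in> {1..M}" "j = ms r" by blast
    have "ms 1 \<le> ms r" "ms r \<le> ms M" using strict_mono_on_leD[OF smm] r assms(1) by auto
    then show "j \<in> {1..M1}" using r assms by auto
  qed
  have subn: "ns ` {1..N} \<subseteq> {1..N1}"
  proof
    fix j assume "j \<in> ns ` {1..N}"
    then obtain r where r: "r \<in> {1..N}" "j = ns r" by blast
    have "ns 1 \<le> ns r" "ns r \<le> ns N" using strict_mono_on_leD[OF smn] r assms(2) by auto
    then show "j \<in> {1..N1}" using r assms by auto
  qed
  have Bns: "Bc (ns s) = emb M ms (Ac s)" if s: "s \<in> {1..N}" for s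
  proof
    fix j show "Bc (ns s) j = emb M ms (Ac s) j"
    proof (cases "j \<in> ms ` {1..M}")
      case True
      then obtain r where r: "r \<in> {1..M}" "j = ms r" by blast
      then show ?thesis using BA s emb_ms[OF injm r(1)] unfolding Bc_def Ac_def by simp
    next
      case False
      then show ?thesis using B0 unfolding Bc_def emb_def by simp
    qed
  qed
  have mapeq: "map (emb M ms) (map Ac [Suc 0..<Suc N]) = map Bc (map ns [Suc 0..<Suc N])"
    using Bns by auto
  define Q where "Q = P1 \<circ> Bc"
  have sortn: "sorted_wrt (<) (map ns [Suc 0..<Suc N])"
    unfolding sorted_wrt_map
    by (rule sorted_wrt_mono_rel[OF _ sorted_wrt_upt]) (use strict_mono_onD[OF smn] in auto)
  have fl: "filter Q [Suc 0..<Suc N1] = filter Q (map ns [Suc 0..<Suc N])"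
  proof (rule sorted_distinct_set_unique)
    show "sorted (filter Q [Suc 0..<Suc N1])" "distinct (filter Q [Suc 0..<Suc N1])"
      using sorted_wrt_filter[OF sorted_wrt_upt, of Q "Suc 0" "Suc N1"] unfolding strict_sorted_iff by simp_all
    show "sorted (filter Q (map ns [Suc 0..<Suc N]))" "distinct (filter Q (map ns [Suc 0..<Suc N]))"
      using sorted_wrt_filter[OF sortn] unfolding strict_sorted_iff by simp_all
    show "set (filter Q [Suc 0..<Suc N1]) = set (filter Q (map ns [Suc 0..<Suc N]))"
    proof -
      have "k \<in> ns ` {1..N}" if "k \<in> {1..N1}" "Q k" for k
      proof (rule ccontr)
        assume "k \<notin> ns ` {1..N}"
        then have "Bc k = (\<lambda>_. 0)" using B0 unfolding Bc_def by auto
        then show False using that(2) unfolding Q_def P1_def by simp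
      qed
      then show ?thesis unfolding set_filter set_map set_upt atLeastLessThanSuc_atLeastAtMost
        using subn by (auto simp del: upt_Suc)
    qed
  qed
  have "W M1 lam (map Bc [Suc 0..<Suc N1]) (\<lambda>_. 0) = W M1 lam (filter P1 (map Bc [Suc 0..<Suc N1])) (\<lambda>_. 0)"
    unfolding P1_def by (rule W_filter[OF lam])
  also have "filter P1 (map Bc [Suc 0..<Suc N1]) = map Bc (filter Q [Suc 0..<Suc N1])"
    unfolding Q_def by (simp only: filter_map)
  also have "\<dots> = map Bc (filter Q (map ns [Suc 0..<Suc N]))" by (simp only: fl)
  also have "\<dots> = filter P1 (map Bc (map ns [Suc 0..<Suc N]))" unfolding Q_def by (simp only: filter_map)
  also have "\<dots> = filter P1 (map (emb M ms) (map Ac [Suc 0..<Suc N]))" by (simp only: mapeq)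
  also have "W M1 lam \<dots> (\<lambda>_. 0) = W M1 lam (map (emb M ms) (map Ac [Suc 0..<Suc N])) (\<lambda>_. 0)"
    unfolding P1_def by (rule W_filter[OF lam, symmetric])
  also have "W M1 lam (map (emb M ms) (map Ac [Suc 0..<Suc N])) (\<lambda>_. 0) = W M lam (map Ac [Suc 0..<Suc N]) (\<lambda>_. 0)"
  proof -
    have z: "emb M ms (\<lambda>_. 0) = (\<lambda>_. 0)" by (simp add: emb_def fun_eq_iff)
    show ?thesis using W_emb[OF injm subm assms(1), of lam "map Ac [Suc 0..<Suc N]" "\<lambda>_. 0"] unfolding z .
  qed
  finally show ?thesis unfolding Bc_def Ac_def .
qed

theorem lemma2p4:
  fixes Mp :: "'a measure" and P :: "nat \<Rightarrow> 'a set set"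
    and A B :: "nat \<Rightarrow> nat \<Rightarrow> complex" and M N M1 N1 :: nat and ms ns :: "nat \<Rightarrow> nat"
  assumes "prob_space Mp" and "dyadic_filtration Mp P"
    and "M \<ge> 1" and "N \<ge> 1"
    and "strict_mono_on {1..M} ms" and "strict_mono_on {1..N} ns"
    and "ms 1 \<ge> 1" and "ns 1 \<ge> 1"
    and "M1 \<ge> ms M" and "N1 \<ge> ns N"
    and "\<forall>r\<in>{1..M}. \<forall>s\<in>{1..N}. B (ms r) (ns s) = A r s"
    and "\<forall>j k. j \<notin> ms ` {1..M} \<or> k \<notin> ns ` {1..N} \<longrightarrow> B j k = 0"
  shows "hconst Mp P M N A = hconst Mp P M1 N1 B"
proof -
  interpret dyad Mp P
    using assms(1,2) by (simp add: dyad_def dyad_axioms_def)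
  have "{c::real. 0 \<le> c \<and>
     (\<forall>f::'a \<Rightarrow> complex. f \<in> borel_measurable Mp \<and> integrable Mp (\<lambda>x. (cmod (f x))\<^sup>2) \<longrightarrow>
        L2norm Mp (\<lambda>x. MAX j\<in>{1..M}. cmod (\<Sum>k=1..N. A j k * dyadic_diff Mp P k f x)) \<le> c * L2norm Mp f)}
    = {c::real. 0 \<le> c \<and>
     (\<forall>f::'a \<Rightarrow> complex. f \<in> borel_measurable Mp \<and> integrable Mp (\<lambda>x. (cmod (f x))\<^sup>2) \<longrightarrow>
        L2norm Mp (\<lambda>x. MAX j\<in>{1..M1}. cmod (\<Sum>k=1..N1. B j k * dyadic_diff Mp P k f x)) \<le> c * L2norm Mp f)}"
  proof (rule Collect_cong)
    fix c :: real
    show "(0 \<le> c \<and> (\<forall>f::'a \<Rightarrow> complex. f \<in> borel_measurable Mp \<and> integrable Mp (\<lambda>x. (cmod (f x))\<^sup>2) \<longrightarrow>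
        L2norm Mp (\<lambda>x. MAX j\<in>{1..M}. cmod (\<Sum>k=1..N. A j k * dyadic_diff Mp P k f x)) \<le> c * L2norm Mp f)) =
      (0 \<le> c \<and> (\<forall>f::'a \<Rightarrow> complex. f \<in> borel_measurable Mp \<and> integrable Mp (\<lambda>x. (cmod (f x))\<^sup>2) \<longrightarrow>
        L2norm Mp (\<lambda>x. MAX j\<in>{1..M1}. cmod (\<Sum>k=1..N1. B j k * dyadic_diff Mp P k f x)) \<le> c * L2norm Mp f))"
      using Q_iff[where c=c and R=M and L=N and X=A] Q_iff[where c=c and R=M1 and L=N1 and X=B] comb[OF assms(3-12), of "c\<^sup>2"] by auto
  qed
  then show ?thesis unfolding hconst_def by simp
qed


end
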